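(* Let $k\ge1$, $r=\sqrt[k]{p}$. In multi-level MS with character-based regular sampling with a sampling factor in $\Theta(kr)$ and character-based bounded assignment, the maximum number of characters per PE in each level is in $\mathcal{O}\bigl(\frac{N}{p}+k^2r\hat{\ell}\bigr)$.
   Context: $p$ PEs hold strings with $N$ characters in total, $\Theta(N/p)$ per PE initially; $\hat{\ell}$ is the length of the longest string; $\|X\|$ denotes the number of characters of a set of strings $X$. Multi-level MS (with $p=r^k$): each PE sorts its local strings; then on each level $t=1,\dots,k$ the PEs form $r^{t-1}$ groups of $p'=r^{k+1-t}$ consecutive PEs, each group independently sorting the concatenation $S'$ of its PEs' locally sorted arrays $S_i$: $r-1$ splitters $f_1<\dots<f_{r-1}$ are chosen, bucket $B^j=\bigcup_i\{s\in S_i:f_j<s\le f_{j+1}\}$ ($f_0=-\infty,f_r=\infty$) is assigned to the $j$-th subgroup of $p''=p'/r$ PEs such that each PE of the subgroup receives at most $\|B^j\|/p''+\hat{\ell}$ characters (strings are not split), and received sequences are merged. Character-based regular sampling with factor $v$: with $\omega'=\|S'\|/(p'(v+1))$, PE $i$ draws $\lceil\|S_i\|/\omega'\rceil-1$ equally spaced positions in its local character array, shifted to the beginning of the containing strings, which are taken as samples (first PEs draw one more if fewer than $p'(v+1)$ result); samples $V$ are sorted globally and $f_j=V[j|V|/r-1]$. *)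

theory Defs
  imports Complex_Main "HOL-Library.Multiset" "HOL-Library.List_Lexorder"
begin

text \<open>Strings are lists over a linearly ordered alphabet, compared lexicographically
  (order on lists from List_Lexorder). A PE's local data is a list of strings.\<close>

definition chars :: "'a list list \<Rightarrow> nat" where
  "chars X = sum_list (map length X)"

definition chars_mset :: "'a list multiset \<Rightarrow> nat" where
  "chars_mset M = sum_mset (image_mset length M)"

text \<open>The string of a local string array that contains character position q (0-based)
  of the concatenated character array; None if q is out of range.\<close>
fun str_at :: "'a list list \<Rightarrow> nat \<Rightarrow> 'a list option" where
  "str_at [] q = None"
| "str_at (s # ss) q = (if q < length s then Some s else str_at ss (q - length s))"

text \<open>Character-based regular sampling within one group of pg PEs whose local
  (sorted) arrays are A 0, ..., A (pg-1); sampling factor v.\<close>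

definition omega :: "nat \<Rightarrow> nat \<Rightarrow> (nat \<Rightarrow> 'a list list) \<Rightarrow> real" where
  "omega pg v A = real (\<Sum>i<pg. chars (A i)) / real (pg * (v + 1))"

definition base_cnt :: "nat \<Rightarrow> nat \<Rightarrow> (nat \<Rightarrow> 'a list list) \<Rightarrow> nat \<Rightarrow> nat" where
  "base_cnt pg v A i = nat (\<lceil>real (chars (A i)) / omega pg v A\<rceil> - 1)"

definition deficit :: "nat \<Rightarrow> nat \<Rightarrow> (nat \<Rightarrow> 'a list list) \<Rightarrow> nat" where
  "deficit pg v A = pg * (v + 1) - (\<Sum>i<pg. base_cnt pg v A i)"

definition n_samples :: "nat \<Rightarrow> nat \<Rightarrow> (nat \<Rightarrow> 'a list list) \<Rightarrow> nat \<Rightarrow> nat" where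
  "n_samples pg v A i = base_cnt pg v A i + (if i < deficit pg v A then 1 else 0)"

definition sample_pos :: "nat \<Rightarrow> nat \<Rightarrow> (nat \<Rightarrow> 'a list list) \<Rightarrow> nat \<Rightarrow> nat list" where
  "sample_pos pg v A i =
     map (\<lambda>j. j * chars (A i) div (n_samples pg v A i + 1)) [1..<n_samples pg v A i + 1]"

definition local_samples :: "nat \<Rightarrow> nat \<Rightarrow> (nat \<Rightarrow> 'a list list) \<Rightarrow> nat \<Rightarrow> 'a list list" where
  "local_samples pg v A i = List.map_filter (str_at (A i)) (sample_pos pg v A i)"

definition sorted_samples :: "nat \<Rightarrow> nat \<Rightarrow> (nat \<Rightarrow> ('a::linorder) list list) \<Rightarrow> 'a list list" where
  "sorted_samples pg v A = sort (concat (map (local_samples pg v A) [0..<pg]))"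

definition splitter :: "nat \<Rightarrow> nat \<Rightarrow> nat \<Rightarrow> (nat \<Rightarrow> ('a::linorder) list list) \<Rightarrow> nat \<Rightarrow> 'a list" where
  "splitter r pg v A j = (let V = sorted_samples pg v A in V ! (j * length V div r - 1))"

definition in_bucket :: "nat \<Rightarrow> nat \<Rightarrow> nat \<Rightarrow> (nat \<Rightarrow> ('a::linorder) list list) \<Rightarrow> nat \<Rightarrow> 'a list \<Rightarrow> bool" where
  "in_bucket r pg v A j s \<longleftrightarrow>
     (j = 0 \<or> splitter r pg v A j < s) \<and> (j = r - 1 \<or> s \<le> splitter r pg v A (Suc j))"

definition bucket :: "nat \<Rightarrow> nat \<Rightarrow> nat \<Rightarrow> (nat \<Rightarrow> ('a::linorder) list list) \<Rightarrow> nat \<Rightarrow> 'a list multiset" where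
  "bucket r pg v A j = (\<Sum>i<pg. mset (filter (in_bucket r pg v A j) (A i)))"

text \<open>Level t (1 <= t <= k) of multi-level MS with p = r^k PEs: state X before, Y after.
  Groups of pg = r^(k+1-t) consecutive PEs; bucket j goes to the j-th subgroup of
  psub = r^(k-t) PEs, each PE receiving a (merged, hence sorted) part of the bucket with at
  most |B^j|/psub + lmax characters (character-based bounded assignment).\<close>
definition ms_level_step ::
  "nat \<Rightarrow> nat \<Rightarrow> nat \<Rightarrow> nat \<Rightarrow> nat \<Rightarrow> (nat \<Rightarrow> ('a::linorder) list list) \<Rightarrow> (nat \<Rightarrow> 'a list list) \<Rightarrow> bool" where
  "ms_level_step r k v lmax t X Y \<longleftrightarrow>
     (let pg = r ^ (k + 1 - t); psub = r ^ (k - t) in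
      \<forall>g < r ^ (t - 1). \<forall>j < r.
        (let A = (\<lambda>i. X (g * pg + i)); B = bucket r pg v A j in
          (\<Sum>i<psub. mset (Y (g * pg + j * psub + i))) = B \<and>
          (\<forall>i<psub. sorted (Y (g * pg + j * psub + i)) \<and>
             real (chars (Y (g * pg + j * psub + i)))
               \<le> real (chars_mset B) / real psub + real lmax)))"

definition ms_N :: "nat \<Rightarrow> nat \<Rightarrow> (nat \<Rightarrow> 'a list list) \<Rightarrow> nat" where
  "ms_N r k In = (\<Sum>i<r ^ k. chars (In i))"

definition ms_lhat :: "nat \<Rightarrow> nat \<Rightarrow> (nat \<Rightarrow> 'a list list) \<Rightarrow> nat" where
  "ms_lhat r k In = Max (insert 0 (length ` (\<Union>i<r ^ k. set (In i))))"

text \<open>A run: X t i is the local sorted string array of PE i after level t (t = 0: after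
  local sorting of the input In).\<close>
definition multilevel_ms_run ::
  "nat \<Rightarrow> nat \<Rightarrow> nat \<Rightarrow> (nat \<Rightarrow> ('a::linorder) list list) \<Rightarrow> (nat \<Rightarrow> nat \<Rightarrow> 'a list list) \<Rightarrow> bool" where
  "multilevel_ms_run r k v In X \<longleftrightarrow>
     (\<forall>i < r ^ k. X 0 i = sort (In i)) \<and>
     (\<forall>t \<in> {1..k}. ms_level_step r k v (ms_lhat r k In) t (X (t - 1)) (X t))"

end

theory Submission
  imports Defs
begin

lemma chars_append[simp]: "chars (xs @ ys) = chars xs + chars ys"
  by (simp add: chars_def)
lemma chars_Cons[simp]: "chars (x # xs) = length x + chars xs"
  by (simp add: chars_def)
lemma chars_Nil[simp]: "chars [] = 0"
  by (simp add: chars_def)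

lemma chars_mset_mset: "chars_mset (mset xs) = chars xs"
  by (induction xs) (auto simp: chars_mset_def chars_def)

lemma chars_mset_sum: "chars_mset (\<Sum>i\<in>I. M i) = (\<Sum>i\<in>I. chars_mset (M i))"
  by (induction I rule: infinite_finite_induct) (auto simp: chars_mset_def)

lemma str_at_append_ge: "chars xs \<le> q \<Longrightarrow> str_at (xs @ ys) q = str_at ys (q - chars xs)"
  by (induction xs arbitrary: q) (auto simp: diff_diff_add)

lemma str_at_append_lt: "q < chars ys \<Longrightarrow> \<exists>s \<in> set ys. str_at (ys @ zs) q = Some s"
  by (induction ys arbitrary: q) auto

lemma str_at_mid:
  assumes "chars P1 \<le> q" "q < chars P1 + chars M"
  shows "\<exists>s \<in> set M. str_at (P1 @ M @ P3) q = Some s"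
  using assms str_at_append_ge[of P1 q "M @ P3"] str_at_append_lt[of "q - chars P1" M P3] by auto

lemma str_at_lt: "q < chars ys \<Longrightarrow> str_at ys q \<noteq> None"
  using str_at_append_lt[of q ys "[]"] by auto

lemma chars_filter_split:
  assumes "\<And>s. P s \<Longrightarrow> Q s \<or> R s"
  shows "chars (filter P xs) \<le> chars (filter Q xs) + chars (filter R xs)"
  using assms by (induction xs) auto

lemma chars_filter_eq: "chars (filter (\<lambda>s. s = f) xs) = count (mset xs) f * length f"
  by (induction xs) auto

lemma chars_filter_le: "chars (filter P xs) \<le> chars xs"
  by (induction xs) auto

lemma length_map_filter_le: "length (List.map_filter g xs) \<le> length xs"
  by (induction xs) (auto simp: map_filter_simps split: option.splits)

lemma length_map_filter_filter:
  assumes "\<And>q. q \<in> set xs \<Longrightarrow> P q \<Longrightarrow> \<exists>s. g q = Some s \<and> Q s"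
  shows "length (filter P xs) \<le> length (filter Q (List.map_filter g xs))"
  using assms by (induction xs) (fastforce simp: map_filter_simps split: option.splits)+

lemma sorted_convex_split:
  fixes A :: "('b::linorder) list"
  assumes "sorted A"
    and lo: "\<And>x y. x \<le> y \<Longrightarrow> lowok x \<Longrightarrow> lowok y"
    and hi: "\<And>x y. x \<le> y \<Longrightarrow> highok y \<Longrightarrow> highok x"
  shows "\<exists>P1 M P3. A = P1 @ M @ P3 \<and> (\<forall>s\<in>set M. lowok s \<and> highok s)
     \<and> (\<forall>s\<in>set P1 \<union> set P3. \<not> (lowok s \<and> highok s))"
proof -
  define P1 where "P1 = takeWhile (\<lambda>s. \<not> lowok s) A"
  define R where "R = dropWhile (\<lambda>s. \<not> lowok s) A"
  define M where "M = takeWhile highok R"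
  define P3 where "P3 = dropWhile highok R"
  have A: "A = P1 @ R" by (simp add: P1_def R_def)
  have R: "R = M @ P3" by (simp add: M_def P3_def)
  have sR: "sorted R" using assms(1) A sorted_append by metis
  have Rlo: "\<forall>s\<in>set R. lowok s"
  proof (cases R)
    case Nil then show ?thesis by simp
  next
    case (Cons x xs)
    have "lowok x" using Cons unfolding R_def by (metis dropWhile_eq_Cons_conv)
    moreover have "\<forall>y\<in>set xs. x \<le> y" using sR Cons by simp
    ultimately show ?thesis using Cons lo by auto
  qed
  have P3hi: "\<forall>s\<in>set P3. \<not> highok s"
  proof (cases P3)
    case Nil then show ?thesis by simp
  next
    case (Cons x xs)
    have "\<not> highok x" using Cons unfolding P3_def by (metis dropWhile_eq_Cons_conv)
    moreover have "sorted P3" using sR R sorted_append by metis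
    then have "\<forall>y\<in>set xs. x \<le> y" using Cons by simp
    ultimately show ?thesis using Cons hi by auto
  qed
  have P1lo: "\<forall>s\<in>set P1. \<not> lowok s" unfolding P1_def by (auto dest: set_takeWhileD)
  have Mhi: "\<forall>s\<in>set M. highok s" unfolding M_def by (auto dest: set_takeWhileD)
  show ?thesis
    apply (rule exI[of _ P1], rule exI[of _ M], rule exI[of _ P3])
    using A R Rlo P3hi P1lo Mhi by auto
qed

lemma Kset:
  fixes c n x :: nat
  assumes "0 < c" "x \<le> c"
  shows "{j\<in>{1..<n+1}. j * c div (n+1) < x} = {1..<(x*(n+1) + c - 1) div c}"
proof -
  have iff: "j < (x*(n+1) + c - 1) div c \<longleftrightarrow> j * c < x * (n+1)" for j
  proof -
    have "j < (x*(n+1) + c - 1) div c \<longleftrightarrow> Suc j \<le> (x*(n+1) + c - 1) div c" by (rule Suc_le_eq[symmetric])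
    also have "\<dots> \<longleftrightarrow> Suc j * c \<le> x*(n+1) + c - 1"
      using assms(1) by (rule less_eq_div_iff_mult_less_eq)
    also have "\<dots> \<longleftrightarrow> j * c < x * (n+1)" using assms(1) by auto
    finally show ?thesis .
  qed
  have bound: "(x*(n+1) + c - 1) div c \<le> n + 1"
  proof -
    have "x*(n+1) \<le> c*(n+1)" using assms by (intro mult_le_mono1)
    then have "x*(n+1) + c - 1 < (n+2) * c" using assms(1) by (simp add: algebra_simps)
    then have "(x*(n+1) + c - 1) div c < n + 2" using assms(1) by (simp add: div_less_iff_less_mult)
    then show ?thesis by simp
  qed
  have dv: "j * c div (n+1) < x \<longleftrightarrow> j * c < x * (n+1)" for j
    by (simp add: div_less_iff_less_mult)
  show ?thesis
  proof (rule set_eqI)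
    fix j
    show "j \<in> {j\<in>{1..<n+1}. j * c div (n+1) < x} \<longleftrightarrow> j \<in> {1..<(x*(n+1) + c - 1) div c}"
      using iff[of j] bound dv[of j] by auto
  qed
qed

lemma Jbounds:
  fixes c X :: nat
  assumes "0 < c"
  shows "X \<le> (X + c - 1) div c * c" "(X + c - 1) div c * c \<le> X + c - 1"
proof -
  have "X + c - 1 < (X + c - 1) div c * c + c"
    using assms by (metis div_mult_mod_eq add_less_cancel_left mod_less_divisor)
  then show "X \<le> (X + c - 1) div c * c" by linarith
  show "(X + c - 1) div c * c \<le> X + c - 1" by (rule div_times_less_eq_dividend)
qed

lemma count_positions:
  fixes c n a b :: nat
  assumes "0 < c" "a \<le> b" "b \<le> c"
  shows "real (b - a) \<le> real c / real (n+1) *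
    (real (length (filter (\<lambda>q. a \<le> q \<and> q < b) (map (\<lambda>j. j * c div (n+1)) [1..<n+1]))) + 1)"
proof -
  define h where "h j = j * c div (n+1)" for j
  define Ja where "Ja = (a*(n+1) + c - 1) div c"
  define Jb where "Jb = (b*(n+1) + c - 1) div c"
  define cnt where "cnt = length (filter (\<lambda>q. a \<le> q \<and> q < b) (map h [1..<n+1]))"
  have "cnt = length (filter (\<lambda>j. a \<le> h j \<and> h j < b) [1..<n+1])"
    unfolding cnt_def by (simp add: filter_map comp_def)
  also have "\<dots> = card ({j. a \<le> h j \<and> h j < b} \<inter> {1..<n+1})"
    by (metis distinct_length_filter distinct_upt set_upt)
  also have "{j. a \<le> h j \<and> h j < b} \<inter> {1..<n+1} =
      {j\<in>{1..<n+1}. j * c div (n+1) < b} - {j\<in>{1..<n+1}. j * c div (n+1) < a}"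
    unfolding h_def by auto
  also have "\<dots> = {1..<Jb} - {1..<Ja}"
    using Kset[OF assms(1), of b n] Kset[OF assms(1), of a n] assms unfolding Ja_def Jb_def by simp
  finally have cnt: "cnt = card ({1..<Jb} - {1..<Ja})" .
  have c1: "cnt + 1 \<ge> Jb - Ja + (if Ja = 0 then 0 else 1)" 
  proof -
    have "{max 1 Ja..<Jb} \<subseteq> {1..<Jb} - {1..<Ja}" by auto
    then have "card {max 1 Ja..<Jb} \<le> cnt" unfolding cnt by (intro card_mono) auto
    then show ?thesis by auto
  qed
  have jb: "b*(n+1) \<le> Jb * c" unfolding Jb_def by (rule Jbounds(1)[OF assms(1)])
  have ja: "Ja * c \<le> a*(n+1) + c - 1" unfolding Ja_def by (rule Jbounds(2)[OF assms(1)])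
  have key: "real (b - a) * real (n+1) \<le> real c * (real cnt + 1)"
  proof (cases "Ja = 0")
    case True
    then have "real cnt + 1 \<ge> real Jb" using c1 by simp
    then have "real c * (real cnt + 1) \<ge> real c * real Jb" using assms(1) by simp
    moreover have "real Jb * real c \<ge> real b * real (n+1)" using jb
      by (metis of_nat_le_iff of_nat_mult)
    moreover have "real (b - a) \<le> real b" by simp
    ultimately show ?thesis
      by (smt (verit, ccfv_SIG) mult.commute mult_right_mono of_nat_0_le_iff)
  next
    case False
    then have "Jb - Ja \<le> cnt" using c1 by simp
    then have "real cnt + 1 \<ge> real Jb - real Ja + 1" by (cases "Ja \<le> Jb") (simp_all add: of_nat_diff)
    then have "real c * (real cnt + 1) \<ge> real c * (real Jb - real Ja + 1)" using assms(1)
      by (simp add: mult_left_mono)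
    moreover have "real Jb * real c \<ge> real b * real (n+1)" using jb
      by (metis of_nat_le_iff of_nat_mult)
    moreover have "real Ja * real c \<le> real a * real (n+1) + real c - 1"
    proof -
      have "real (Ja*c) \<le> real (a*(n+1) + c - 1)" using ja by (simp only: of_nat_le_iff)
      also have "\<dots> = real a * real (n+1) + real c - 1" using assms(1) by (simp add: of_nat_diff algebra_simps)
      finally show ?thesis by simp
    qed
    moreover have "real (b - a) = real b - real a" using assms by simp
    ultimately show ?thesis by (simp add: algebra_simps)
  qed
  show ?thesis
    using key unfolding cnt_def h_def by (simp add: field_simps)
qed

lemma mid_bound:
  fixes A :: "('a::linorder) list list"
  assumes "sorted A"
    and lo: "\<And>x y. x \<le> y \<Longrightarrow> lowok x \<Longrightarrow> lowok y"
    and hi: "\<And>x y. x \<le> y \<Longrightarrow> highok y \<Longrightarrow> highok x"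
  shows "real (chars (filter (\<lambda>s. lowok s \<and> highok s) A)) \<le> real (chars A) / real (n+1) *
    (real (length (filter (\<lambda>s. lowok s \<and> highok s)
       (List.map_filter (str_at A) (map (\<lambda>j. j * chars A div (n+1)) [1..<n+1])))) + 1)"
proof (cases "chars A = 0")
  case True
  then show ?thesis using chars_filter_le[of _ A] by simp
next
  case False
  have ex: "\<exists>P1 M P3. A = P1 @ M @ P3 \<and> (\<forall>s\<in>set M. lowok s \<and> highok s)
     \<and> (\<forall>s\<in>set P1 \<union> set P3. \<not> (lowok s \<and> highok s))"
    apply (rule sorted_convex_split)
      apply (rule assms(1))
     apply (erule (1) lo)
    apply (erule (1) hi)
    done
  then obtain P1 M P3 where A: "A = P1 @ M @ P3" and M: "\<forall>s\<in>set M. lowok s \<and> highok s"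
    and P: "\<forall>s\<in>set P1 \<union> set P3. \<not> (lowok s \<and> highok s)"
    by blast
  define Q where "Q s = (lowok s \<and> highok s)" for s
  have fQ: "filter Q A = M" using M P unfolding A Q_def by auto
  define a where "a = chars P1"
  define b where "b = chars P1 + chars M"
  define pos where "pos = map (\<lambda>j. j * chars A div (n+1)) [1..<n+1]"
  have ab: "a \<le> b" "b \<le> chars A" unfolding a_def b_def A by auto
  have cp: "real (b - a) \<le> real (chars A) / real (n+1) *
    (real (length (filter (\<lambda>q. a \<le> q \<and> q < b) pos)) + 1)"
    unfolding pos_def using count_positions[of "chars A" a b n] ab False by simp
  have le: "length (filter (\<lambda>q. a \<le> q \<and> q < b) pos) \<le> length (filter Q (List.map_filter (str_at A) pos))"
  proof (rule length_map_filter_filter)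
    fix q assume "q \<in> set pos" "a \<le> q \<and> q < b"
    then obtain s where "s \<in> set M" "str_at A q = Some s"
      using str_at_mid[of P1 q M P3] unfolding A a_def b_def by auto
    then show "\<exists>s. str_at A q = Some s \<and> Q s" using M unfolding Q_def by auto
  qed
  have "real (chars (filter Q A)) = real (b - a)" unfolding fQ a_def b_def by simp
  also have "\<dots> \<le> real (chars A) / real (n+1) * (real (length (filter Q (List.map_filter (str_at A) pos))) + 1)"
    using cp le by (meson add_le_cancel_right divide_nonneg_nonneg mult_left_mono of_nat_0_le_iff of_nat_le_iff order_trans)
  finally show ?thesis unfolding Q_def pos_def .
qed

lemma sorted_count_between:
  fixes V :: "'b::linorder list"
  assumes "sorted V" "j < r"
  shows "length (filter (\<lambda>s. (j = 0 \<or> V ! (j * length V div r - 1) < s) \<and>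
            (j = r - 1 \<or> s < V ! (Suc j * length V div r - 1))) V)
         \<le> Suc j * length V div r - j * length V div r"
proof -
  define m where "m = length V"
  define P where "P s = ((j = 0 \<or> V ! (j * m div r - 1) < s) \<and>
            (j = r - 1 \<or> s < V ! (Suc j * m div r - 1)))" for s
  have r0: "r > 0" using assms by simp
  have sub: "{i. i < m \<and> P (V ! i)} \<subseteq> {j * m div r..<Suc j * m div r}"
  proof
    fix i assume "i \<in> {i. i < m \<and> P (V ! i)}"
    then have im: "i < m" and Pi: "P (V ! i)" by auto
    have jm: "j * m div r \<le> m" using assms(2) by (metis div_le_mono less_or_eq_imp_le mult_le_mono1 nonzero_mult_div_cancel_left r0 less_not_refl)
    have sjm: "Suc j * m div r \<le> m" using assms(2) by (metis Suc_leI div_le_mono mult_le_mono1 nonzero_mult_div_cancel_left r0 less_not_refl)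
    have lo: "j * m div r \<le> i"
    proof (cases "j = 0")
      case True then show ?thesis by simp
    next
      case False
      then have lt: "V ! (j * m div r - 1) < V ! i" using Pi unfolding P_def by auto
      show ?thesis
      proof (rule ccontr)
        assume "\<not> j * m div r \<le> i"
        then have "i \<le> j * m div r - 1" "j * m div r - 1 < m" using jm im by auto
        then have "V ! i \<le> V ! (j * m div r - 1)" using sorted_nth_mono[OF assms(1)] unfolding m_def by blast
        then show False using lt by simp
      qed
    qed
    have hi: "i < Suc j * m div r"
    proof (cases "j = r - 1")
      case True
      then have "Suc j = r" using assms(2) by simp
      then show ?thesis using im r0 by simp
    next
      case False
      then have lt: "V ! i < V ! (Suc j * m div r - 1)" using Pi unfolding P_def by auto
      show ?thesis
      proof (rule ccontr)
        assume "\<not> i < Suc j * m div r"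
        then have "Suc j * m div r - 1 \<le> i" by simp
        then have "V ! (Suc j * m div r - 1) \<le> V ! i" using sorted_nth_mono[OF assms(1)] im unfolding m_def by blast
        then show False using lt by simp
      qed
    qed
    show "i \<in> {j * m div r..<Suc j * m div r}" using lo hi by simp
  qed
  have "length (filter P V) = card {i. i < m \<and> P (V ! i)}"
    unfolding m_def by (rule length_filter_conv_card)
  also have "\<dots> \<le> card {j * m div r..<Suc j * m div r}" by (rule card_mono[OF _ sub]) simp
  also have "\<dots> = Suc j * m div r - j * m div r" by simp
  finally show ?thesis unfolding P_def m_def .
qed

lemma div_diff_bound:
  fixes m r j :: nat
  assumes "r > 0"
  shows "real (Suc j * m div r - j * m div r) \<le> real m / real r + 1"
proof -
  have "Suc j * m div r = (j * m + m) div r" by (simp add: algebra_simps)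
  also have "\<dots> = j * m div r + m div r + (j * m mod r + m mod r) div r" by (rule div_add1_eq)
  also have "(j * m mod r + m mod r) div r \<le> 1"
  proof -
    have "j * m mod r < r" "m mod r < r" using assms by simp_all
    then have "j * m mod r + m mod r < 2 * r" by linarith
    then have "(j * m mod r + m mod r) div r < 2" using assms by (simp add: div_less_iff_less_mult mult.commute)
    then show ?thesis by simp
  qed
  finally have "Suc j * m div r - j * m div r \<le> m div r + 1" by simp
  then have "real (Suc j * m div r - j * m div r) \<le> real (m div r) + 1" by linarith
  also have "real (m div r) \<le> real m / real r" by (rule of_nat_div_le_of_nat)
  finally show ?thesis by simp
qed

lemma length_filter_sort: "length (filter Q (sort xs)) = length (filter Q xs)"
  by (rule mset_eq_length) simp

lemma sum_upt_list: "(\<Sum>i<n. g i) = sum_list (map g [0..<n])"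
  by (metis atLeast0LessThan set_upt sum_set_upt_conv_sum_list_nat)

lemma length_sorted_samples:
  "length (sorted_samples pg v A) = (\<Sum>i<pg. length (local_samples pg v A i))"
  unfolding sorted_samples_def by (simp add: length_concat sum_upt_list comp_def)

lemma filter_sorted_samples:
  "length (filter Q (sorted_samples pg v A)) = (\<Sum>i<pg. length (filter Q (local_samples pg v A i)))"
  unfolding sorted_samples_def length_filter_sort
  by (simp add: filter_concat length_concat sum_upt_list comp_def)

lemma omega_pos:
  assumes "0 < pg" "0 < (\<Sum>i<pg. chars (A i))"
  shows "omega pg v A > 0"
proof -
  have "pg * (v + 1) > 0" using assms by simp
  then have "real (\<Sum>i<pg. chars (A i)) > 0" "real (pg * (v + 1)) > 0" using assms by (metis of_nat_0_less_iff)+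
  then show ?thesis unfolding omega_def by (rule divide_pos_pos)
qed

lemma omega_sum:
  assumes "0 < pg"
  shows "real (\<Sum>i<pg. chars (A i)) = omega pg v A * real (pg * (v + 1))"
proof -
  have "pg * (v + 1) \<noteq> 0" using assms by simp
  then have "real (pg * (v + 1)) \<noteq> 0" by (metis of_nat_eq_0_iff)
  then show ?thesis unfolding omega_def
    by (metis nonzero_eq_divide_eq)
qed

lemma n_samples_lower:
  assumes "omega pg v A > 0"
  shows "real (chars (A i)) \<le> omega pg v A * (real (n_samples pg v A i) + 1)"
proof -
  define w where "w = omega pg v A"
  have "real (chars (A i)) / w \<le> real_of_int (\<lceil>real (chars (A i)) / w\<rceil>)" by (rule le_of_int_ceiling)
  also have "\<dots> \<le> real (base_cnt pg v A i) + 1" unfolding base_cnt_def w_def by linarith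
  also have "\<dots> \<le> real (n_samples pg v A i) + 1" unfolding n_samples_def by simp
  finally show ?thesis using assms unfolding w_def[symmetric] by (simp add: divide_le_eq mult.commute)
qed

lemma n_samples_upper:
  assumes "omega pg v A > 0"
  shows "omega pg v A * real (n_samples pg v A i) \<le> real (chars (A i)) + omega pg v A"
proof -
  define w where "w = omega pg v A"
  have x0: "real (chars (A i)) / w \<ge> 0" using assms unfolding w_def by simp
  have "real (base_cnt pg v A i) \<le> real (chars (A i)) / w"
  proof (cases "\<lceil>real (chars (A i)) / w\<rceil> - 1 \<ge> 0")
    case True
    then have "real (base_cnt pg v A i) = real_of_int (\<lceil>real (chars (A i)) / w\<rceil> - 1)"
      unfolding base_cnt_def w_def by simp
    also have "\<dots> \<le> real (chars (A i)) / w" by linarith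
    finally show ?thesis .
  next
    case False
    then have "base_cnt pg v A i = 0" unfolding base_cnt_def w_def by simp
    then show ?thesis using x0 by simp
  qed
  then have "real (n_samples pg v A i) \<le> real (chars (A i)) / w + 1" unfolding n_samples_def by simp
  then have "w * real (n_samples pg v A i) \<le> w * (real (chars (A i)) / w + 1)"
    using assms unfolding w_def by (simp add: mult_left_mono)
  also have "\<dots> = real (chars (A i)) + w" using assms unfolding w_def by (simp add: field_simps)
  finally show ?thesis unfolding w_def .
qed

lemma samples_len:
  assumes "0 < pg" "0 < (\<Sum>i<pg. chars (A i))"
  shows "omega pg v A * real (length (sorted_samples pg v A))
      \<le> real (\<Sum>i<pg. chars (A i)) + real pg * omega pg v A"
proof -
  have w: "omega pg v A > 0" using omega_pos[OF assms] .
  have "length (local_samples pg v A i) \<le> n_samples pg v A i" for i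
    unfolding local_samples_def sample_pos_def
    using length_map_filter_le by (metis diff_add_inverse2 length_map length_upt)
  then have "length (sorted_samples pg v A) \<le> (\<Sum>i<pg. n_samples pg v A i)"
    unfolding length_sorted_samples by (intro sum_mono) auto
  then have "real (length (sorted_samples pg v A)) \<le> (\<Sum>i<pg. real (n_samples pg v A i))"
    by (metis of_nat_le_iff of_nat_sum)
  then have "omega pg v A * real (length (sorted_samples pg v A)) \<le> omega pg v A * (\<Sum>i<pg. real (n_samples pg v A i))"
    using w by (simp add: mult_left_mono)
  also have "\<dots> = (\<Sum>i<pg. omega pg v A * real (n_samples pg v A i))" by (simp add: sum_distrib_left)
  also have "\<dots> \<le> (\<Sum>i<pg. real (chars (A i)) + omega pg v A)"
    by (intro sum_mono n_samples_upper[OF w])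
  also have "\<dots> = real (\<Sum>i<pg. chars (A i)) + real pg * omega pg v A" by (simp add: sum.distrib)
  finally show ?thesis .
qed

lemma splitter_eq: "splitter r pg v A k = sorted_samples pg v A ! (k * length (sorted_samples pg v A) div r - 1)"
  by (simp add: splitter_def Let_def)

lemma chars_bucket: "chars_mset (bucket r pg v A j) = (\<Sum>i<pg. chars (filter (in_bucket r pg v A j) (A i)))"
  unfolding bucket_def chars_mset_sum by (simp add: chars_mset_mset[symmetric])

lemma bucket_bound:
  fixes A :: "nat \<Rightarrow> ('a::linorder) list list"
  assumes r: "0 < r" and j: "j < r" and pg: "0 < pg"
    and sorted: "\<forall>i<pg. sorted (A i)"
    and cnt1: "\<forall>s. count (\<Sum>i<pg. mset (A i)) s \<le> 1"
    and len: "\<forall>i<pg. \<forall>s\<in>set (A i). length s \<le> L"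
    and Spos: "0 < (\<Sum>i<pg. chars (A i))"
  shows "real (chars_mset (bucket r pg v A j))
     \<le> omega pg v A * (real (length (sorted_samples pg v A)) / real r + 1 + real pg) + real L"
proof -
  define V where "V = sorted_samples pg v A"
  define m where "m = length V"
  define w where "w = omega pg v A"
  have w: "w > 0" unfolding w_def by (rule omega_pos[OF pg Spos])
  define f where "f k = splitter r pg v A k" for k
  have f: "f k = V ! (k * m div r - 1)" for k unfolding f_def V_def m_def by (rule splitter_eq)
  define lowok where "lowok s = (j = 0 \<or> f j < s)" for s
  define highok where "highok s = (j = r - 1 \<or> s < f (Suc j))" for s
  define Q where "Q s = (lowok s \<and> highok s)" for s
  define R where "R s = (j \<noteq> r - 1 \<and> s = f (Suc j))" for s
  have QR: "in_bucket r pg v A j s \<Longrightarrow> Q s \<or> R s" for s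
    unfolding in_bucket_def Q_def R_def lowok_def highok_def f_def by auto
  have "chars_mset (bucket r pg v A j) \<le> (\<Sum>i<pg. chars (filter Q (A i)) + chars (filter R (A i)))"
    unfolding chars_bucket by (intro sum_mono chars_filter_split QR)
  also have "\<dots> = (\<Sum>i<pg. chars (filter Q (A i))) + (\<Sum>i<pg. chars (filter R (A i)))"
    by (rule sum.distrib)
  finally have step1: "real (chars_mset (bucket r pg v A j)) \<le>
      real (\<Sum>i<pg. chars (filter Q (A i))) + real (\<Sum>i<pg. chars (filter R (A i)))"
    by linarith
  have Rb: "(\<Sum>i<pg. chars (filter R (A i))) \<le> L"
  proof (cases "j = r - 1")
    case True
    then have "filter R (A i) = []" for i unfolding R_def by simp
    then show ?thesis by simp
  next
    case False
    define g where "g = f (Suc j)"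
    have "filter R (A i) = filter (\<lambda>s. s = g) (A i)" for i unfolding R_def g_def using False by simp
    then have "(\<Sum>i<pg. chars (filter R (A i))) = (\<Sum>i<pg. count (mset (A i)) g * length g)"
      by (simp add: chars_filter_eq)
    also have "\<dots> = count (\<Sum>i<pg. mset (A i)) g * length g"
      by (simp add: sum_distrib_right count_sum)
    also have "\<dots> \<le> L"
    proof (cases "count (\<Sum>i<pg. mset (A i)) g = 0")
      case True then show ?thesis by simp
    next
      case False
      then obtain i where "i < pg" "g \<in> set (A i)" by (auto simp: count_sum)
      then have "length g \<le> L" using len by auto
      moreover have "count (\<Sum>i<pg. mset (A i)) g \<le> 1" using cnt1 by auto
      ultimately show ?thesis by (metis False le_antisym mult_1 not_one_le_zero le_zero_eq less_one linorder_not_less)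
    qed
    finally show ?thesis .
  qed
  define cnt where "cnt i = length (filter Q (local_samples pg v A i))" for i
  have mid: "real (chars (filter Q (A i))) \<le> w * (real (cnt i) + 1)" if i: "i < pg" for i
  proof -
    have mb: "real (chars (filter Q (A i))) \<le> real (chars (A i)) / real (n_samples pg v A i + 1) * (real (cnt i) + 1)"
      unfolding Q_def cnt_def local_samples_def sample_pos_def
      apply (rule mid_bound)
      using sorted i apply simp
      unfolding lowok_def highok_def apply auto
      done
    have "real (chars (A i)) / real (n_samples pg v A i + 1) \<le> w"
      using n_samples_lower[OF w[unfolded w_def], of i] unfolding w_def[symmetric]
      by (simp add: divide_le_eq mult.commute add.commute)
    then show ?thesis using mb
      by (meson le_add_same_cancel2 mult_right_mono of_nat_0_le_iff order_trans zero_le_one add_nonneg_nonneg)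
  qed
  have "real (\<Sum>i<pg. chars (filter Q (A i))) \<le> (\<Sum>i<pg. w * (real (cnt i) + 1))"
    unfolding of_nat_sum by (intro sum_mono mid) simp
  also have "\<dots> = w * (real (\<Sum>i<pg. cnt i) + real pg)"
    by (simp add: sum_distrib_left[symmetric] sum.distrib)
  also have "(\<Sum>i<pg. cnt i) = length (filter Q V)"
    unfolding cnt_def V_def by (rule filter_sorted_samples[symmetric])
  also have "length (filter Q V) \<le> Suc j * m div r - j * m div r"
  proof -
    have sV: "sorted V" unfolding V_def sorted_samples_def by simp
    show ?thesis
      using sorted_count_between[OF sV j] unfolding Q_def lowok_def highok_def f m_def .
  qed
  also have "real (Suc j * m div r - j * m div r) \<le> real m / real r + 1"
    by (rule div_diff_bound[OF r])
  finally have "real (\<Sum>i<pg. chars (filter Q (A i))) \<le> w * (real m / real r + 1 + real pg)"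
    using w by (simp add: mult_left_mono)
  then show ?thesis using step1 Rb unfolding w_def m_def V_def by linarith
qed

lemma chars_bucket_le: "chars_mset (bucket r pg v A j) \<le> (\<Sum>i<pg. chars (A i))"
  unfolding chars_bucket by (intro sum_mono chars_filter_le)

lemma level_bound:
  fixes A :: "nat \<Rightarrow> ('a::linorder) list list"
  assumes r: "0 < r" and j: "j < r" and pg: "pg = r * psub" and ps: "0 < psub"
    and sorted: "\<forall>i<pg. sorted (A i)"
    and cnt1: "\<forall>s. count (\<Sum>i<pg. mset (A i)) s \<le> 1"
    and len: "\<forall>i<pg. \<forall>s\<in>set (A i). length s \<le> L"
    and M: "\<forall>i<pg. real (chars (A i)) \<le> M"
    and Y: "real c \<le> real (chars_mset (bucket r pg v A j)) / real psub + real L"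
  shows "real c \<le> M * (1 + 3 * real r / real (v+1)) + 2 * real L"
proof -
  have pg0: "0 < pg" using r ps pg by simp
  have M0: "M \<ge> 0" using M pg0 by (meson of_nat_0_le_iff order_trans)
  have S_le: "real (\<Sum>i<pg. chars (A i)) \<le> real pg * M"
    using sum_mono[of "{..<pg}" "\<lambda>i. real (chars (A i))" "\<lambda>_. M"] M by simp
  define B where "B = real (chars_mset (bucket r pg v A j))"
  have extra: "M * (3 * real r / real (v+1)) \<ge> 0" using M0 by simp
  show ?thesis
  proof (cases "(\<Sum>i<pg. chars (A i)) = 0")
    case True
    then have "B = 0" unfolding B_def using chars_bucket_le[of r pg v A j] by simp
    then have "real c \<le> real L" using Y unfolding B_def by simp
    moreover have "M * (1 + 3 * real r / real (v+1)) \<ge> 0" using M0 by simp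
    ultimately show ?thesis by linarith
  next
    case False
    then have Spos: "0 < (\<Sum>i<pg. chars (A i))" by (simp only: gr_zeroI)
    define S where "S = real (\<Sum>i<pg. chars (A i))"
    define w where "w = omega pg v A"
    define m where "m = real (length (sorted_samples pg v A))"
    have w0: "w > 0" unfolding w_def by (rule omega_pos[OF pg0 Spos])
    have Bb: "B \<le> w * (m / real r + 1 + real pg) + real L"
      unfolding B_def w_def m_def by (rule bucket_bound[OF r j pg0 sorted cnt1 len Spos])
    have wm: "w * m \<le> S + real pg * w"
      unfolding S_def w_def m_def by (rule samples_len[OF pg0 Spos])
    have wdef: "w = S / (real pg * real (v+1))" unfolding w_def S_def omega_def by (simp add: algebra_simps)
    have SM: "S / real pg \<le> M" using S_le pg0 unfolding S_def by (simp add: divide_le_eq mult.commute)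
    have wM: "w \<le> M / real (v+1)"
    proof -
      have "w = S / real pg / real (v+1)" unfolding wdef by (simp add: field_simps)
      moreover have "S / real pg / real (v+1) \<le> M / real (v+1)" by (rule divide_right_mono[OF SM]) simp
      ultimately show ?thesis by simp
    qed
    have rpg: "real pg = real r * real psub" using pg by simp
    have "B / real psub = real r * B / real pg" using r ps rpg by (simp add: field_simps)
    also have "\<dots> \<le> real r * (w * (m / real r + 1 + real pg) + real L) / real pg"
      using Bb r pg0 by (simp add: divide_right_mono mult_left_mono)
    also have "\<dots> = (w * m) / real pg + real r * w / real pg + real r * w + real L / real psub"
      using r ps rpg by (simp add: field_simps)
    also have "\<dots> \<le> (S + real pg * w) / real pg + w + real r * w + real L"
    proof -
      have "(w * m) / real pg \<le> (S + real pg * w) / real pg" using wm pg0 by (simp add: divide_right_mono)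
      moreover have "real r * w / real pg \<le> w" using rpg ps w0 r by (simp add: field_simps)
      moreover have "real L / real psub \<le> real L" using ps
        by (simp add: divide_le_eq mult_le_cancel_left1)
      ultimately show ?thesis by linarith
    qed
    also have "\<dots> = S / real pg + 2 * w + real r * w + real L" using pg0 by (simp add: field_simps)
    also have "\<dots> \<le> M + 3 * real r * w + real L"
    proof -
      have "2 * w \<le> 2 * real r * w" using r w0 by simp
      then show ?thesis using SM by linarith
    qed
    also have "\<dots> \<le> M + 3 * real r * (M / real (v+1)) + real L"
      using mult_left_mono[OF wM, of "3 * real r"] by simp
    finally have "B / real psub \<le> M * (1 + 3 * real r / real (v+1)) + real L" by (simp add: algebra_simps)
    then show ?thesis using Y unfolding B_def by linarith
  qed
qed

lemma decomp:
  fixes r k t i :: nat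
  assumes "1 \<le> t" "t \<le> k" "i < r ^ k" "0 < r"
  shows "\<exists>g<r^(t-1). \<exists>j<r. \<exists>i'<r^(k-t). i = g * r^(k+1-t) + j * r^(k-t) + i'"
proof -
  define psub where "psub = r^(k-t)"
  define pg where "pg = r^(k+1-t)"
  have pg: "pg = r * psub" unfolding pg_def psub_def using assms by (simp add: Suc_diff_le)
  have rk: "r^k = r^(t-1) * pg" unfolding pg_def using assms by (simp add: power_add[symmetric])
  have ps0: "psub > 0" unfolding psub_def using assms by simp
  define g where "g = i div pg"
  define j where "j = i mod pg div psub"
  define i' where "i' = i mod psub"
  have pg0: "pg > 0" unfolding pg_def using assms by simp
  have g: "g < r^(t-1)" unfolding g_def using assms(3) rk pg0 by (simp add: div_less_iff_less_mult)
  have "i mod pg < pg" using pg ps0 assms(4) by simp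
  then have j: "j < r" unfolding j_def pg using ps0 by (simp add: div_less_iff_less_mult)
  have i': "i' < psub" unfolding i'_def using ps0 by simp
  have "i mod pg mod psub = i mod psub" unfolding pg by (simp add: mod_mod_cancel)
  then have "i = g * pg + j * psub + i'" unfolding g_def j_def i'_def
    by (metis div_mult_mod_eq add.assoc)
  then show ?thesis using g j i' unfolding pg_def psub_def by blast
qed

lemma bucket_sub: "bucket r pg v A j \<subseteq># (\<Sum>i<pg. mset (A i))"
  unfolding bucket_def
  by (rule mset_subset_eqI) (auto simp: count_sum intro!: sum_mono)

lemma chars_sort: "chars (sort xs) = chars xs"
  by (metis chars_mset_mset mset_sort)

lemma idx_bound:
  fixes r k t g i :: nat
  assumes "t \<le> k" "g < r^t" "i < r^(k-t)"
  shows "g * r^(k-t) + i < r^k"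
proof -
  have "g * r^(k-t) + i < (g + 1) * r^(k-t)" using assms(3) by simp
  also have "\<dots> \<le> r^t * r^(k-t)" using assms(2) by (intro mult_le_mono1) simp
  also have "\<dots> = r^k" using assms(1) by (simp add: power_add[symmetric])
  finally show ?thesis .
qed

lemma main:
  fixes In :: "nat \<Rightarrow> ('a::linorder) list list" and X :: "nat \<Rightarrow> nat \<Rightarrow> 'a list list"
  assumes k: "k \<ge> 1" and r: "r \<ge> 1" and c1: "0 < c1" and v: "c1 * real (k*r) \<le> real v"
    and dist: "distinct (concat (map In [0..<r^k]))"
    and up: "\<forall>i<r^k. real (chars (In i)) \<le> c_hi * real (ms_N r k In) / real (r^k)"
    and run: "multilevel_ms_run r k v In X"
  shows "\<forall>t\<le>k. \<forall>i<r^k. real (chars (X t i)) \<le>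
     exp (3/c1) * (c_hi * real (ms_N r k In) / real (r^k) + 2 * real k * real (ms_lhat r k In))"
proof -
  define p where "p = r^k"
  define U where "U = (\<Sum>i<p. mset (In i))"
  define L where "L = ms_lhat r k In"
  define M0 where "M0 = c_hi * real (ms_N r k In) / real (r^k)"
  define q where "q = 1 + (3/c1) / real k"
  have r0: "0 < r" using r by simp
  have p0: "0 < p" unfolding p_def using r0 by simp
  have cntU: "count U s \<le> 1" for s
  proof -
    have "mset (concat (map In [0..<p])) = U"
      unfolding U_def mset_concat by (simp add: sum_upt_list comp_def)
    then show ?thesis using dist unfolding p_def[symmetric]
      by (metis distinct_count_atmost_1 order_refl zero_le_one)
  qed
  have lenU: "length s \<le> L" if "s \<in># U" for s
  proof -
    have "count U s \<noteq> 0" using that by simp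
    then have "(\<Sum>i<p. count (mset (In i)) s) \<noteq> 0" unfolding U_def count_sum .
    then obtain i where "i<p" "count (mset (In i)) s \<noteq> 0" using sum.not_neutral_contains_not_neutral by blast
    then have i: "i < p" "s \<in> set (In i)" by auto
    have fin: "finite (insert 0 (length ` (\<Union>i<r ^ k. set (In i))))" by simp
    have "length s \<in> insert 0 (length ` (\<Union>i<r ^ k. set (In i)))" using i unfolding p_def by blast
    then show ?thesis unfolding L_def ms_lhat_def using Max_ge[OF fin] by blast
  qed
  have X0: "\<forall>i<p. X 0 i = sort (In i)" and stepX: "\<forall>t\<in>{1..k}. ms_level_step r k v L t (X (t - 1)) (X t)"
    using run unfolding multilevel_ms_run_def p_def L_def by auto
  have stepE: "(\<Sum>i<r^(k-t). mset (X t (g * r^(k+1-t) + j * r^(k-t) + i)))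
                 = bucket r (r^(k+1-t)) v (\<lambda>i. X (t-1) (g * r^(k+1-t) + i)) j
             \<and> (\<forall>i<r^(k-t). sorted (X t (g * r^(k+1-t) + j * r^(k-t) + i)) \<and>
                 real (chars (X t (g * r^(k+1-t) + j * r^(k-t) + i)))
                  \<le> real (chars_mset (bucket r (r^(k+1-t)) v (\<lambda>i. X (t-1) (g * r^(k+1-t) + i)) j)) / real (r^(k-t)) + real L)"
    if "1 \<le> t" "t \<le> k" "g < r^(t-1)" "j < r" for t g j
  proof -
    have st: "ms_level_step r k v L t (X (t-1)) (X t)" using stepX that(1,2) by simp
    show ?thesis using st[unfolded ms_level_step_def Let_def, rule_format, OF that(3) that(4)] .
  qed
  have sortedX: "sorted (X t i)" if tk: "t \<le> k" and ip: "i < p" for t i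
  proof (cases "t = 0")
    case True then show ?thesis using X0 that by simp
  next
    case False
    then obtain g j i' where "g<r^(t-1)" "j<r" "i'<r^(k-t)" "i = g * r^(k+1-t) + j * r^(k-t) + i'"
      using decomp[of t k i r] tk ip r0 False unfolding p_def by auto
    then show ?thesis using stepE[of t g j] False tk by auto
  qed
  have INV: "\<forall>g<r^t. (\<Sum>i<r^(k-t). mset (X t (g * r^(k-t) + i))) \<subseteq># U" if "t \<le> k" for t
    using that
  proof (induction t)
    case 0
    have "(\<Sum>i<r^(k-0). mset (X 0 (0 * r^(k-0) + i))) = U"
      unfolding U_def p_def using X0 unfolding p_def by (intro sum.cong) auto
    then show ?case by simp
  next
    case (Suc t)
    show ?case
    proof (intro allI impI)
      fix g' assume g': "g' < r^Suc t"
      define g where "g = g' div r"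
      define j where "j = g' mod r"
      define pg where "pg = r^(k-t)"
      define psub where "psub = r^(k - Suc t)"
      have pg: "pg = r * psub" unfolding pg_def psub_def using Suc.prems by (simp add: Suc_diff_Suc[symmetric])
      have pg': "r^(k+1 - Suc t) = pg" unfolding pg_def by simp
      have g: "g < r^(Suc t - 1)" unfolding g_def using g' r0 by (simp add: div_less_iff_less_mult mult.commute)
      have j: "j < r" unfolding j_def using r0 by simp
      have idx: "g' * psub + i = g * pg + j * psub + i" for i
      proof -
        have "g' = g * r + j" unfolding g_def j_def by simp
        then show ?thesis unfolding pg by (simp add: algebra_simps)
      qed
      have "(\<Sum>i<psub. mset (X (Suc t) (g' * psub + i)))
          = (\<Sum>i<psub. mset (X (Suc t) (g * pg + j * psub + i)))" by (simp add: idx)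
      also have "\<dots> = bucket r pg v (\<lambda>i. X t (g * pg + i)) j"
        using stepE[of "Suc t" g j] Suc.prems g j unfolding pg' psub_def by simp
      also have "\<dots> \<subseteq># (\<Sum>i<pg. mset (X t (g * pg + i)))" by (rule bucket_sub)
      also have "\<dots> \<subseteq># U" using Suc.IH Suc.prems g unfolding pg_def by simp
      finally show "(\<Sum>i<r^(k - Suc t). mset (X (Suc t) (g' * r^(k - Suc t) + i))) \<subseteq># U"
        unfolding psub_def .
    qed
  qed
  have M0: "M0 \<ge> 0" using up p0 unfolding M0_def p_def by (meson of_nat_0_le_iff order_trans)
  have kpos: "real k > 0" using k by simp
  have q1: "q \<ge> 1" unfolding q_def using c1 kpos by simp
  have ratio: "3 * real r / real (v+1) \<le> (3/c1) / real k"
  proof -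
    have pos: "c1 * real k * real r > 0" using c1 kpos r0 by simp
    have "c1 * real k * real r \<le> real (v+1)" using v by (simp add: algebra_simps)
    then have "3 * real r / real (v+1) \<le> 3 * real r / (c1 * real k * real r)"
      using pos r0 by (intro divide_left_mono) auto
    also have "\<dots> = (3/c1) / real k" using r0 c1 kpos by (simp add: field_simps)
    finally show ?thesis .
  qed
  define Mb where "Mb t = q^t * (M0 + 2 * real t * real L)" for t
  have Mb0: "Mb t \<ge> 0" for t unfolding Mb_def using q1 M0 by simp
  have BND: "\<forall>i<p. real (chars (X t i)) \<le> Mb t" if "t \<le> k" for t
    using that
  proof (induction t)
    case 0
    show ?case using X0 up unfolding Mb_def M0_def p_def by (simp add: chars_sort)
  next
    case (Suc t)
    show ?case
    proof (intro allI impI)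
      fix i assume ip: "i < p"
      obtain g j i' where g: "g<r^(Suc t-1)" and j: "j<r" and i': "i'<r^(k-Suc t)"
          and ieq: "i = g * r^(k+1-Suc t) + j * r^(k-Suc t) + i'"
        using decomp[of "Suc t" k i r] Suc.prems ip r0 unfolding p_def by auto
      define pg where "pg = r^(k-t)"
      define psub where "psub = r^(k - Suc t)"
      have pg: "pg = r * psub" unfolding pg_def psub_def using Suc.prems by (simp add: Suc_diff_Suc[symmetric])
      have pg': "r^(k+1 - Suc t) = pg" unfolding pg_def by simp
      have ps0: "0 < psub" unfolding psub_def using r0 by simp
      define A where "A i = X t (g * pg + i)" for i
      have gt: "g < r^t" using g by simp
      have tk: "t \<le> k" using Suc.prems by simp
      have inr: "g * pg + i < p" if "i < pg" for i
        unfolding p_def pg_def using idx_bound[OF tk gt] that unfolding pg_def by simp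
      have sub: "(\<Sum>i<pg. mset (A i)) \<subseteq># U" using INV[OF tk] gt unfolding A_def pg_def by simp
      have sA: "\<forall>i<pg. sorted (A i)" unfolding A_def using sortedX[OF tk] inr by simp
      have cA: "\<forall>s. count (\<Sum>i<pg. mset (A i)) s \<le> 1"
        using sub cntU by (meson mset_subset_eq_count order_trans)
      have lA: "\<forall>i<pg. \<forall>s\<in>set (A i). length s \<le> L"
      proof (intro allI impI ballI)
        fix i s assume ipg: "i < pg" and si: "s \<in> set (A i)"
        have "0 < count (mset (A i)) s" using si by simp
        also have "\<dots> \<le> (\<Sum>i'<pg. count (mset (A i')) s)" by (rule member_le_sum) (use ipg in auto)
        finally have "0 < count (\<Sum>i<pg. mset (A i)) s" by (simp add: count_sum)
        then have "s \<in># (\<Sum>i<pg. mset (A i))" by (simp only: count_greater_zero_iff)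
        then have "s \<in># U" using sub by (meson mset_subset_eqD)
        then show "length s \<le> L" by (rule lenU)
      qed
      have MA: "\<forall>i<pg. real (chars (A i)) \<le> Mb t" using Suc.IH[OF tk] inr unfolding A_def by simp
      have Yb: "real (chars (X (Suc t) i)) \<le> real (chars_mset (bucket r pg v A j)) / real psub + real L"
        using stepE[of "Suc t" g j] Suc.prems g j i' unfolding ieq pg' psub_def A_def by simp
      have lb: "real (chars (X (Suc t) i)) \<le> Mb t * (1 + 3 * real r / real (v+1)) + 2 * real L"
        by (rule level_bound[OF r0 j pg ps0 sA cA lA MA Yb])
      also have "\<dots> \<le> Mb t * q + 2 * real L"
        using ratio Mb0[of t] unfolding q_def by (simp add: mult_left_mono)
      also have "\<dots> \<le> Mb (Suc t)"
      proof -
        have "Mb t * q + 2 * real L = q^Suc t * (M0 + 2 * real t * real L) + 2 * real L"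
          unfolding Mb_def by (simp add: algebra_simps)
        also have "2 * real L \<le> q^Suc t * (2 * real L)"
        proof -
          have "1 \<le> q^Suc t" using q1 by (rule one_le_power)
          then show ?thesis using mult_right_mono[of 1 "q^Suc t" "2 * real L"] by simp
        qed
        then have "q^Suc t * (M0 + 2 * real t * real L) + 2 * real L \<le> q^Suc t * (M0 + 2 * real t * real L) + q^Suc t * (2 * real L)" by simp
        also have "\<dots> = Mb (Suc t)" unfolding Mb_def by (simp add: algebra_simps)
        finally show ?thesis by simp
      qed
      finally show "real (chars (X (Suc t) i)) \<le> Mb (Suc t)" .
    qed
  qed
  show ?thesis
  proof (intro allI impI)
    fix t i assume tk: "t \<le> k" and ip: "i < r^k"
    have "real (chars (X t i)) \<le> Mb t" using BND[OF tk] ip unfolding p_def by simp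
    also have "\<dots> \<le> q^k * (M0 + 2 * real k * real L)"
      unfolding Mb_def using tk q1 M0
      by (intro mult_mono power_increasing) (auto intro!: mult_right_mono)
    also have "\<dots> \<le> exp (3/c1) * (M0 + 2 * real k * real L)"
    proof (rule mult_right_mono)
      show "q^k \<le> exp (3/c1)" unfolding q_def
      proof (rule exp_ge_one_plus_x_over_n_power_n)
        have "0 \<le> 3/c1" using c1 by simp
        then show "- real k \<le> 3/c1" by linarith
        show "k > 0" using k by simp
      qed
      show "0 \<le> M0 + 2 * real k * real L" using M0 by simp
    qed
    finally show "real (chars (X t i)) \<le> exp (3/c1) * (c_hi * real (ms_N r k In) / real (r^k) + 2 * real k * real (ms_lhat r k In))"
      unfolding M0_def L_def .
  qed
qed

theorem theorem5:
  fixes c_lo c_hi c1 c2 :: real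
  assumes "0 < c_lo" and "0 < c1"
  shows "\<exists>C::real. \<forall>(k::nat) (r::nat) (v::nat) (In :: nat \<Rightarrow> ('a::linorder) list list) X.
     k \<ge> 1 \<and> r \<ge> 1 \<and>
     c1 * real (k * r) \<le> real v \<and> real v \<le> c2 * real (k * r) \<and>
     distinct (concat (map In [0..<r ^ k])) \<and>
     (\<forall>i < r ^ k. c_lo * real (ms_N r k In) / real (r ^ k) \<le> real (chars (In i)) \<and>
                  real (chars (In i)) \<le> c_hi * real (ms_N r k In) / real (r ^ k)) \<and>
     multilevel_ms_run r k v In X
     \<longrightarrow> (\<forall>t \<le> k. \<forall>i < r ^ k.
            real (chars (X t i))
              \<le> C * (real (ms_N r k In) / real (r ^ k) + real k ^ 2 * real r * real (ms_lhat r k In)))"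
proof -
  define C where "C = exp (3/c1) * (\<bar>c_hi\<bar> + 2)"
  show ?thesis
    apply (rule exI[of _ C])
    apply (intro allI impI)
    apply (elim conjE)
    subgoal premises prems for k r v In X t i
    proof -
      have k: "k \<ge> 1" and r: "r \<ge> 1" and v: "c1 * real (k * r) \<le> real v"
        and dist: "distinct (concat (map In [0..<r ^ k]))"
        and up: "\<forall>i<r^k. real (chars (In i)) \<le> c_hi * real (ms_N r k In) / real (r^k)"
        and run: "multilevel_ms_run r k v In X" and tk: "t \<le> k" and ip: "i < r^k"
        using prems by auto
      have B: "real (chars (X t i)) \<le> exp (3/c1) * (c_hi * real (ms_N r k In) / real (r^k) + 2 * real k * real (ms_lhat r k In))"
        using main[OF k r assms(2) v dist up run] tk ip by blast
      define x where "x = real (ms_N r k In) / real (r^k)"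
      define y where "y = real k ^ 2 * real r * real (ms_lhat r k In)"
      define Lr where "Lr = real (ms_lhat r k In)"
      have x0: "x \<ge> 0" unfolding x_def by simp
      have ky: "real k * Lr \<le> y"
      proof -
        have "real k \<le> real k ^ 2 * real r"
        proof -
          have "real k \<le> real k * real k" using k by simp
          also have "\<dots> \<le> real k * real k * real r"
            using mult_left_mono[of 1 "real r" "real k * real k"] r by simp
          finally show ?thesis by (simp add: power2_eq_square)
        qed
        then show ?thesis unfolding y_def Lr_def by (simp add: mult_right_mono)
      qed
      have "c_hi * x + 2 * real k * Lr \<le> (\<bar>c_hi\<bar> + 2) * (x + y)"
      proof -
        have "c_hi * x \<le> \<bar>c_hi\<bar> * x" using x0 by (simp add: mult_right_mono)
        moreover have "0 \<le> \<bar>c_hi\<bar> * y + 2 * x" using ky x0 by (simp add: order_trans[OF _ ky] Lr_def)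
        ultimately show ?thesis using ky by (simp add: algebra_simps)
      qed
      then have fin: "exp (3/c1) * (c_hi * x + 2 * real k * Lr) \<le> C * (x + y)"
        unfolding C_def using mult_left_mono[of _ _ "exp (3/c1)"] by (simp add: mult.assoc)
      have B': "real (chars (X t i)) \<le> exp (3/c1) * (c_hi * x + 2 * real k * Lr)"
        using B unfolding x_def Lr_def by simp
      show ?thesis using order_trans[OF B' fin] unfolding x_def y_def .
    qed
    done
qed

end
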